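(* Let $a\in\mathcal{T}_n$ have rank $k$ with $k<n$ and kernel type $\lambda$. Let $G\le\mathcal{S}_n$ be a group which is $k$-homogeneous and $\lambda$-homogeneous. Then $(a,G)$ is an $\mathcal{S}_n$-pair, i.e. $\langle a,G\rangle\setminus G=\langle a,\mathcal{S}_n\rangle\setminus\mathcal{S}_n$.
   Context: $\Omega=\{1,\ldots,n\}$, $\mathcal{T}_n$ is the monoid of all maps $\Omega\to\Omega$, $\mathcal{S}_n$ the symmetric group. $\operatorname{rank}(a)=|\Omega a|$; the kernel of $a$ is the partition of $\Omega$ into the classes of $\{(x,y):xa=ya\}$, and its type is the non-increasing list of class sizes. $G$ is $k$-homogeneous if transitive on $k$-subsets of $\Omega$. For a partition $\lambda$ of $n$, $G$ is $\lambda$-homogeneous if for any two ordered partitions $(A_1,A_2,\ldots)$, $(B_1,B_2,\ldots)$ of $\Omega$ with $|A_i|=|B_i|=\lambda_i$ there is $g\in G$ mapping the set of parts $\{A_1,A_2,\ldots\}$ onto $\{B_1,B_2,\ldots\}$. *)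

theory Defs
  imports Main "HOL-Library.Multiset"
begin

text \<open>Omega = {1..n}. A map Omega -> Omega is represented extensionally as a function
  nat => nat that maps Omega into Omega and is the identity outside Omega.\<close>

definition Tn :: "nat \<Rightarrow> (nat \<Rightarrow> nat) set" where
  "Tn n = {f. f ` {1..n} \<subseteq> {1..n} \<and> (\<forall>x. x \<notin> {1..n} \<longrightarrow> f x = x)}"

definition Sn :: "nat \<Rightarrow> (nat \<Rightarrow> nat) set" where
  "Sn n = {f \<in> Tn n. bij_betw f {1..n} {1..n}}"

text \<open>Maps act on the right: x(ab) = (xa)b, so the product a*b is the function b o a.\<close>
definition tmult :: "(nat \<Rightarrow> nat) \<Rightarrow> (nat \<Rightarrow> nat) \<Rightarrow> (nat \<Rightarrow> nat)" where
  "tmult a b = b \<circ> a"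

inductive_set gen :: "(nat \<Rightarrow> nat) set \<Rightarrow> (nat \<Rightarrow> nat) set" for S where
  base: "x \<in> S \<Longrightarrow> x \<in> gen S"
| mult: "x \<in> gen S \<Longrightarrow> y \<in> gen S \<Longrightarrow> tmult x y \<in> gen S"

definition is_subgroup_Sn :: "nat \<Rightarrow> (nat \<Rightarrow> nat) set \<Rightarrow> bool" where
  "is_subgroup_Sn n G \<longleftrightarrow> G \<subseteq> Sn n \<and> id \<in> G \<and>
     (\<forall>g\<in>G. \<forall>h\<in>G. tmult g h \<in> G) \<and> (\<forall>g\<in>G. \<exists>h\<in>G. tmult g h = id)"

definition rank :: "nat \<Rightarrow> (nat \<Rightarrow> nat) \<Rightarrow> nat" where
  "rank n a = card (a ` {1..n})"

definition kernel_classes :: "nat \<Rightarrow> (nat \<Rightarrow> nat) \<Rightarrow> nat set set" where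
  "kernel_classes n a = {{x \<in> {1..n}. a x = y} | y. y \<in> a ` {1..n}}"

definition kernel_type :: "nat \<Rightarrow> (nat \<Rightarrow> nat) \<Rightarrow> nat list" where
  "kernel_type n a = rev (sorted_list_of_multiset (image_mset card (mset_set (kernel_classes n a))))"

definition k_homogeneous :: "nat \<Rightarrow> nat \<Rightarrow> (nat \<Rightarrow> nat) set \<Rightarrow> bool" where
  "k_homogeneous n k G \<longleftrightarrow>
     (\<forall>A B. A \<subseteq> {1..n} \<and> B \<subseteq> {1..n} \<and> card A = k \<and> card B = k \<longrightarrow> (\<exists>g\<in>G. g ` A = B))"

definition ordered_partition :: "nat \<Rightarrow> nat list \<Rightarrow> nat set list \<Rightarrow> bool" where
  "ordered_partition n lam As \<longleftrightarrow> length As = length lam \<and>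
     (\<forall>i<length As. card (As ! i) = lam ! i) \<and>
     (\<forall>i<length As. \<forall>j<length As. i \<noteq> j \<longrightarrow> As ! i \<inter> As ! j = {}) \<and>
     \<Union> (set As) = {1..n}"

definition lam_homogeneous :: "nat \<Rightarrow> nat list \<Rightarrow> (nat \<Rightarrow> nat) set \<Rightarrow> bool" where
  "lam_homogeneous n lam G \<longleftrightarrow>
     (\<forall>As Bs. ordered_partition n lam As \<and> ordered_partition n lam Bs \<longrightarrow>
        (\<exists>g\<in>G. (\<lambda>X. g ` X) ` set As = set Bs))"

end

theory Submission
  imports Defs "HOL-Library.FuncSet"
begin

lemma kc_eq: "kernel_classes n f = (\<lambda>y. {x\<in>{1..n}. f x = y}) ` (f ` {1..n})"
  unfolding kernel_classes_def by blast

lemma kc_disj: "X \<in> kernel_classes n f \<Longrightarrow> Y \<in> kernel_classes n f \<Longrightarrow> X \<noteq> Y \<Longrightarrow> X \<inter> Y = {}"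
  unfolding kc_eq by auto

lemma kc_Union: "\<Union> (kernel_classes n f) = {1..n}"
  unfolding kc_eq by auto

lemma OP: "\<exists>As. ordered_partition n (kernel_type n f) As \<and> set As = kernel_classes n f"
proof -
  let ?S = "kernel_classes n f"
  have fin: "finite ?S" by (simp add: kc_eq)
  obtain xs where xs: "distinct xs" "set xs = ?S" using finite_distinct_list[OF fin] by blast
  define As where "As = rev (sort_key card xs)"
  have setA: "set As = ?S" by (simp add: As_def xs)
  have distA: "distinct As" by (simp add: As_def xs)
  have s: "map card (sort_key card xs) = sort (map card xs)"
    by (rule properties_for_sort[symmetric]) (simp_all add: mset_map)
  have m: "image_mset card (mset_set ?S) = mset (map card xs)"
    using xs by (metis mset_set_set mset_map)
  have mapA: "map card As = kernel_type n f"
    unfolding As_def kernel_type_def rev_map[symmetric] s m by (simp only: sorted_list_of_multiset_mset)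
  have "ordered_partition n (kernel_type n f) As"
    unfolding ordered_partition_def
  proof (intro conjI allI impI)
    show "length As = length (kernel_type n f)" using mapA length_map by metis
    fix i assume i: "i < length As"
    show "card (As ! i) = kernel_type n f ! i" using mapA i nth_map by metis
  next
    fix i j assume "i < length As" "j < length As" "i \<noteq> j"
    then have "As ! i \<noteq> As ! j" using distA by (simp add: nth_eq_iff_index_eq)
    moreover have "As ! i \<in> ?S" "As ! j \<in> ?S"
      using \<open>i < length As\<close> \<open>j < length As\<close> setA nth_mem by blast+
    ultimately show "As ! i \<inter> As ! j = {}" by (rule kc_disj[rotated 2])
  next
    show "\<Union> (set As) = {1..n}" unfolding setA by (rule kc_Union)
  qed
  then show ?thesis using setA by blast
qed

lemma Sn_bij: "g \<in> Sn n \<Longrightarrow> bij_betw g {1..n} {1..n}" by (simp add: Sn_def)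
lemma Sn_Tn: "g \<in> Sn n \<Longrightarrow> g \<in> Tn n" by (simp add: Sn_def)
lemma Sn_img: "g \<in> Sn n \<Longrightarrow> g ` {1..n} = {1..n}" by (simp add: Sn_def bij_betw_def)
lemma Sn_mem: "g \<in> Sn n \<Longrightarrow> x \<in> {1..n} \<Longrightarrow> g x \<in> {1..n}"
  using Sn_img[of g n] by (metis imageI)
lemma Sn_inj: "g \<in> Sn n \<Longrightarrow> inj_on g {1..n}" by (simp add: Sn_def bij_betw_def)

lemma KT:
  assumes p: "p \<in> Sn n"
  shows "kernel_type n (a \<circ> p) = kernel_type n a"
proof -
  define h where "h X = {z\<in>{1..n}. p z \<in> X}" for X
  have pim: "p ` {1..n} = {1..n}" using Sn_img[OF p] .
  have pinv: "x \<in> {1..n} \<Longrightarrow> \<exists>z\<in>{1..n}. p z = x" for x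
    using pim by (metis imageE)
  have pz: "z \<in> {1..n} \<Longrightarrow> p z \<in> {1..n}" for z using pim by blast
  have hq: "h {x\<in>{1..n}. a x = y} = {x\<in>{1..n}. a (p x) = y}" for y
    unfolding h_def using pz by blast
  have ap: "(a \<circ> p) ` {1..n} = a ` {1..n}" by (simp only: image_comp[symmetric] pim)
  have kc: "kernel_classes n (a \<circ> p) = h ` kernel_classes n a"
  proof -
    have "kernel_classes n (a \<circ> p) = (\<lambda>y. {x\<in>{1..n}. (a \<circ> p) x = y}) ` (a ` {1..n})"
      unfolding kc_eq ap ..
    also have "\<dots> = (\<lambda>y. h {x\<in>{1..n}. a x = y}) ` (a ` {1..n})"
      unfolding hq by simp
    also have "\<dots> = h ` kernel_classes n a"
      unfolding kc_eq image_image ..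
    finally show ?thesis .
  qed
  have sub: "X \<subseteq> {1..n}" if "X \<in> kernel_classes n a" for X
    using Union_upper[OF that] unfolding kc_Union .
  have inj: "inj_on h (kernel_classes n a)"
  proof (rule inj_onI)
    fix X Y assume X: "X \<in> kernel_classes n a" and Y: "Y \<in> kernel_classes n a" and e: "h X = h Y"
    have "X \<subseteq> Y \<and> Y \<subseteq> X"
    proof (intro conjI subsetI)
      fix x assume x: "x \<in> X"
      then obtain z where z: "z \<in> {1..n}" "p z = x" using sub[OF X] pinv by blast
      then have "z \<in> h X" using x by (simp add: h_def)
      then have "z \<in> h Y" using e by simp
      then show "x \<in> Y" using z by (simp add: h_def)
    next
      fix x assume x: "x \<in> Y"
      then obtain z where z: "z \<in> {1..n}" "p z = x" using sub[OF Y] pinv by blast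
      then have "z \<in> h Y" using x by (simp add: h_def)
      then have "z \<in> h X" using e by simp
      then show "x \<in> X" using z by (simp add: h_def)
    qed
    then show "X = Y" by blast
  qed
  have card: "card (h X) = card X" if X2: "X \<in> kernel_classes n a" for X
  proof -
    have "bij_betw p (h X) X"
      unfolding bij_betw_def
    proof
      have "h X \<subseteq> {1..n}" unfolding h_def by blast
      then show "inj_on p (h X)" using Sn_inj[OF p] inj_on_subset by blast
      show "p ` h X = X"
      proof
        show "p ` h X \<subseteq> X" by (auto simp: h_def)
        show "X \<subseteq> p ` h X"
        proof
          fix x assume x: "x \<in> X"
          then obtain z where z: "z \<in> {1..n}" "p z = x" using sub[OF X2] pinv by blast
          then have "z \<in> h X" using x by (simp add: h_def)
          then show "x \<in> p ` h X" using z by blast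
        qed
      qed
    qed
    then show ?thesis by (rule bij_betw_same_card)
  qed
  have "image_mset card (mset_set (kernel_classes n (a \<circ> p)))
      = image_mset card (image_mset h (mset_set (kernel_classes n a)))"
    unfolding kc image_mset_mset_set[OF inj] ..
  also have "\<dots> = image_mset (card \<circ> h) (mset_set (kernel_classes n a))"
    by (simp only: multiset.map_comp)
  also have "\<dots> = image_mset card (mset_set (kernel_classes n a))"
  proof (rule image_mset_cong)
    fix X assume "X \<in># mset_set (kernel_classes n a)"
    then have "X \<in> kernel_classes n a" by (simp add: kc_eq)
    then show "(card \<circ> h) X = card X" using card by simp
  qed
  finally show ?thesis unfolding kernel_type_def by simp
qed

lemma Tn_eqI:
  assumes "f \<in> Tn n" "g \<in> Tn n" "\<And>x. x \<in> {1..n} \<Longrightarrow> f x = g x" shows "f = g"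
proof
  fix x show "f x = g x" using assms by (cases "x \<in> {1..n}") (auto simp: Tn_def)
qed

lemma tmult_Tn: "f \<in> Tn n \<Longrightarrow> g \<in> Tn n \<Longrightarrow> tmult f g \<in> Tn n"
  by (auto simp: Tn_def tmult_def)

lemma gen_Tn: assumes "S \<subseteq> Tn n" shows "x \<in> gen S \<Longrightarrow> x \<in> Tn n"
  by (induction rule: gen.induct) (use assms in \<open>auto intro: tmult_Tn\<close>)

lemma gen_mono: assumes "S \<subseteq> S'" shows "x \<in> gen S \<Longrightarrow> x \<in> gen S'"
  by (induction rule: gen.induct) (use assms in \<open>auto intro: gen.intros\<close>)

lemma tmult_assoc: "tmult (tmult x y) z = tmult x (tmult y z)"
  by (simp add: tmult_def o_assoc)

lemma tmult_id[simp]: "tmult x id = x" "tmult id x = x"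
  by (simp_all add: tmult_def)

lemma Sn_tmult: assumes "f \<in> Sn n" "g \<in> Sn n" shows "tmult f g \<in> Sn n"
proof -
  have "tmult f g \<in> Tn n" using assms Sn_Tn tmult_Tn by blast
  moreover have "bij_betw (g \<circ> f) {1..n} {1..n}" using assms Sn_bij bij_betw_trans by blast
  ultimately show ?thesis by (simp add: Sn_def tmult_def)
qed

lemma id_Sn: "id \<in> Sn n" by (simp add: Sn_def Tn_def)

lemma gen_pow: "u \<in> gen S \<Longrightarrow> 0 < m \<Longrightarrow> u ^^ m \<in> gen S"
proof (induction m)
  case 0 then show ?case by simp
next
  case (Suc m)
  show ?case
  proof (cases "m = 0")
    case True then show ?thesis using Suc by simp
  next
    case False
    then have "u ^^ m \<in> gen S" using Suc by simp
    from gen.mult[OF this Suc.prems(1)] show ?thesis by (metis tmult_def funpow.simps(2))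
  qed
qed

lemma PER:
  assumes fin: "finite Q" and uQ: "u ` Q \<subseteq> Q" and inj: "inj_on u Q"
  shows "\<exists>m>0. \<forall>q\<in>Q. (u ^^ m) q = q"
proof -
  have img: "(u ^^ i) ` Q \<subseteq> Q" for i
    by (induction i) (use uQ in auto)
  have injp: "inj_on (u ^^ i) Q" for i
  proof (induction i)
    case 0 then show ?case by simp
  next
    case (Suc i)
    have "inj_on (u \<circ> (u ^^ i)) Q"
      by (rule comp_inj_on[OF Suc]) (rule inj_on_subset[OF inj img])
    then show ?case by (metis funpow.simps(2))
  qed
  define F where "F i = restrict (u ^^ i) Q" for i
  have "range F \<subseteq> Q \<rightarrow>\<^sub>E Q" using img by (force simp: F_def)
  then have "finite (range F)" using finite_PiE[OF fin, of "\<lambda>_. Q"] fin finite_subset by blast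
  then have "\<not> inj F" using finite_imageD infinite_UNIV_nat by blast
  then obtain i j where ij: "i \<noteq> j" "F i = F j" by (auto simp: inj_def)
  obtain i j where ij: "i < j" "F i = F j"
  proof (cases "i < j")
    case True then show ?thesis using that ij by blast
  next
    case False then show ?thesis using that[of j i] ij by simp
  qed
  show ?thesis
  proof (intro exI[of _ "j - i"] conjI ballI)
    show "0 < j - i" using ij by simp
    fix q assume q: "q \<in> Q"
    have jj: "u ^^ j = (u ^^ i) \<circ> (u ^^ (j - i))"
      using ij(1) funpow_add[of i "j - i" u] by simp
    have "(u ^^ i) ((u ^^ (j - i)) q) = (u ^^ i) q"
    proof -
      have "(u ^^ i) ((u ^^ (j - i)) q) = (u ^^ j) q" using jj by simp
      also have "\<dots> = F j q" using q by (simp add: F_def)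
      also have "\<dots> = F i q" using ij by simp
      also have "\<dots> = (u ^^ i) q" using q by (simp add: F_def)
      finally show ?thesis .
    qed
    moreover have "(u ^^ (j - i)) q \<in> Q" using img q by blast
    ultimately show "(u ^^ (j - i)) q = q" using injp[of i] q by (meson inj_onD)
  qed
qed

lemma EXT:
  assumes S: "S \<subseteq> {1..n}" and U: "U \<subseteq> {1..n}" and b: "bij_betw \<beta> S U"
  shows "\<exists>p\<in>Sn n. \<forall>s\<in>S. p s = \<beta> s"
proof -
  have fS: "finite S" using S finite_subset by blast
  have fU: "finite U" using U finite_subset by blast
  have "card S = card U" using b by (rule bij_betw_same_card)
  then have "card ({1..n} - S) = card ({1..n} - U)"
    using S U fS fU by (simp add: card_Diff_subset)
  then obtain \<gamma> where g: "bij_betw \<gamma> ({1..n} - S) ({1..n} - U)"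
    using finite_same_card_bij by blast
  define p where "p z = (if z \<in> S then \<beta> z else if z \<in> {1..n} then \<gamma> z else z)" for z
  have b1: "bij_betw p S U" using b by (rule bij_betw_cong[THEN iffD1, rotated]) (simp add: p_def)
  have b2: "bij_betw p ({1..n} - S) ({1..n} - U)"
    using g by (rule bij_betw_cong[THEN iffD1, rotated]) (simp add: p_def)
  have "bij_betw p (S \<union> ({1..n} - S)) (U \<union> ({1..n} - U))"
    by (rule bij_betw_combine[OF b1 b2]) auto
  moreover have "S \<union> ({1..n} - S) = {1..n}" "U \<union> ({1..n} - U) = {1..n}" using S U by auto
  ultimately have bij: "bij_betw p {1..n} {1..n}" by simp
  have i1: "p ` {1..n} \<subseteq> {1..n}" using bij by (simp add: bij_betw_def)
  have i2: "\<forall>z. z \<notin> {1..n} \<longrightarrow> p z = z"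
  proof (intro allI impI)
    fix z assume "z \<notin> {1..n}"
    then have "z \<notin> S" using S by blast
    then show "p z = z" using \<open>z \<notin> {1..n}\<close> by (auto simp: p_def)
  qed
  have "p \<in> Tn n" unfolding Tn_def using i1 i2 by blast
  then have "p \<in> Sn n" using bij by (simp add: Sn_def)
  moreover have "\<forall>s\<in>S. p s = \<beta> s" by (simp add: p_def)
  ultimately show ?thesis by blast
qed


locale L =
  fixes n k :: nat and a :: "nat \<Rightarrow> nat" and G :: "(nat \<Rightarrow> nat) set"
  assumes aT: "a \<in> Tn n" and rk: "rank n a = k" and kn: "k < n"
    and sg: "is_subgroup_Sn n G" and kh: "k_homogeneous n k G"
    and lh: "lam_homogeneous n (kernel_type n a) G"
begin

definition I where "I = a ` {1..n}"

lemma GS: "G \<subseteq> Sn n" using sg by (simp add: is_subgroup_Sn_def)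
lemma aM: "a \<in> gen (insert a G)" by (rule gen.base) simp
lemma GM: "g \<in> G \<Longrightarrow> g \<in> gen (insert a G)" by (rule gen.base) simp
lemma M_Tn: "x \<in> gen (insert a G) \<Longrightarrow> x \<in> Tn n"
  by (rule gen_Tn[of "insert a G"]) (use aT GS Sn_Tn in auto)
lemma I_sub: "I \<subseteq> {1..n}" using aT by (auto simp: I_def Tn_def)
lemma cardI: "card I = k" using rk by (simp add: rank_def I_def)
lemma finI: "finite I" by (simp add: I_def)
lemma aI: "x \<in> {1..n} \<Longrightarrow> a x \<in> I" by (simp add: I_def)

lemma KH: "Q \<subseteq> {1..n} \<Longrightarrow> card Q = k \<Longrightarrow> \<exists>g\<in>G. g ` I = Q"
  by (intro kh[unfolded k_homogeneous_def, rule_format]) (use I_sub cardI in auto)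

lemma LH:
  assumes p: "p \<in> Sn n"
  shows "\<exists>g\<in>G. \<forall>x\<in>{1..n}. \<forall>y\<in>{1..n}. a (g x) = a (g y) \<longleftrightarrow> a (p x) = a (p y)"
proof -
  obtain As where As: "ordered_partition n (kernel_type n (a \<circ> p)) As"
      "set As = kernel_classes n (a \<circ> p)" using OP by blast
  obtain Bs where Bs: "ordered_partition n (kernel_type n a) Bs" "set Bs = kernel_classes n a"
    using OP by blast
  from As KT[OF p] have As': "ordered_partition n (kernel_type n a) As" by simp
  obtain g where g: "g \<in> G" "(\<lambda>X. g ` X) ` set As = set Bs"
    using lh[unfolded lam_homogeneous_def, rule_format, OF conjI[OF As' Bs(1)]] by blast
  have gS: "g \<in> Sn n" using g GS by blast
  show ?thesis
  proof (intro bexI[OF _ g(1)] ballI)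
    fix x y assume x: "x \<in> {1..n}" and y: "y \<in> {1..n}"
    define C where "C = {z \<in> {1..n}. a (p z) = a (p x)}"
    have C: "C \<in> kernel_classes n (a \<circ> p)" unfolding kc_eq C_def
      by (rule image_eqI[where x="a (p x)"]) (use x in auto)
    have "g ` C \<in> (\<lambda>X. g ` X) ` set As" using C As(2) by (intro imageI) simp
    then have "g ` C \<in> kernel_classes n a" using g(2) Bs(2) by simp
    then obtain w where w: "g ` C = {z\<in>{1..n}. a z = w}" unfolding kc_eq by (meson imageE)
    have xC: "x \<in> C" using x by (simp add: C_def)
    then have "g x \<in> g ` C" by blast
    then have "g x \<in> {z\<in>{1..n}. a z = w}" using w by simp
    then have agx: "a (g x) = w" by simp
    show "a (g x) = a (g y) \<longleftrightarrow> a (p x) = a (p y)"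
    proof
      assume "a (g x) = a (g y)"
      moreover have "g y \<in> {1..n}" using y Sn_mem[OF gS] by simp
      ultimately have "g y \<in> g ` C" using w agx by simp
      then obtain c where c: "c \<in> C" "g y = g c" by auto
      have "c \<in> {1..n}" using c by (simp add: C_def)
      then have "y = c" using c Sn_inj[OF gS] y by (meson inj_onD)
      then show "a (p x) = a (p y)" using c by (simp add: C_def)
    next
      assume "a (p x) = a (p y)"
      then have "y \<in> C" using y by (simp add: C_def)
      then have "g y \<in> g ` C" by blast
      then show "a (g x) = a (g y)" using w agx by simp
    qed
  qed
qed

lemma IDEM:
  assumes p: "p \<in> Sn n" and Q: "Q \<subseteq> {1..n}" "card Q = k" and inj: "inj_on (\<lambda>z. a (p z)) Q"
  shows "\<exists>e\<in>gen (insert a G). (\<forall>q\<in>Q. e q = q) \<and>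
           (\<forall>x\<in>{1..n}. \<forall>y\<in>{1..n}. a (p x) = a (p y) \<longrightarrow> e x = e y)"
proof -
  obtain g0 where g0: "g0 \<in> G" "\<forall>x\<in>{1..n}. \<forall>y\<in>{1..n}. a (g0 x) = a (g0 y) \<longleftrightarrow> a (p x) = a (p y)"
    using LH[OF p] by blast
  obtain g1 where g1: "g1 \<in> G" "g1 ` I = Q" using KH Q by blast
  have g0S: "g0 \<in> Sn n" and g1S: "g1 \<in> Sn n" using g0 g1 GS by auto
  define u where "u = tmult (tmult g0 a) g1"
  have uM: "u \<in> gen (insert a G)" unfolding u_def by (intro gen.mult GM aM g0(1) g1(1))
  have ux: "u x = g1 (a (g0 x))" for x by (simp add: u_def tmult_def)
  have g0x: "x \<in> {1..n} \<Longrightarrow> g0 x \<in> {1..n}" for x using Sn_mem[OF g0S] by simp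
  have uQ: "u ` Q \<subseteq> Q"
  proof
    fix z assume "z \<in> u ` Q"
    then obtain q where q: "q \<in> Q" "z = u q" by blast
    then have "q \<in> {1..n}" using Q(1) by blast
    then have "a (g0 q) \<in> I" by (intro aI g0x)
    then have "g1 (a (g0 q)) \<in> g1 ` I" by (rule imageI)
    then have "g1 (a (g0 q)) \<in> Q" using g1(2) by simp
    then show "z \<in> Q" using q ux by simp
  qed
  have uinj: "inj_on u Q"
  proof (rule inj_onI)
    fix q1 q2 assume q: "q1 \<in> Q" "q2 \<in> Q" "u q1 = u q2"
    have qq: "q1 \<in> {1..n}" "q2 \<in> {1..n}" using q Q(1) by blast+
    then have "a (g0 q1) \<in> {1..n}" "a (g0 q2) \<in> {1..n}" using g0x aI I_sub by blast+
    moreover have "g1 (a (g0 q1)) = g1 (a (g0 q2))" using q(3) ux by simp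
    ultimately have "a (g0 q1) = a (g0 q2)" using inj_onD[OF Sn_inj[OF g1S]] by blast
    then have "a (p q1) = a (p q2)" using g0(2) qq by blast
    then show "q1 = q2" using inj q by (meson inj_onD)
  qed
  have finQ: "finite Q" using finite_subset[OF Q(1)] by simp
  obtain m where m: "m > 0" "\<forall>q\<in>Q. (u ^^ m) q = q" using PER[OF finQ uQ uinj] by blast
  have eM: "u ^^ m \<in> gen (insert a G)" using gen_pow[OF uM m(1)] .
  obtain m' where m': "m = Suc m'" using m(1) by (cases m) auto
  have eq: "u ^^ m = (u ^^ m') \<circ> u" unfolding m' by (rule funpow_Suc_right)
  show ?thesis
  proof (intro bexI[OF _ eM] conjI ballI impI)
    fix q assume "q \<in> Q" then show "(u ^^ m) q = q" using m by blast
  next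
    fix x y assume x: "x \<in> {1..n}" and y: "y \<in> {1..n}" and e: "a (p x) = a (p y)"
    then have "a (g0 x) = a (g0 y)" using g0(2) x y by blast
    then have "u x = u y" using ux by simp
    then show "(u ^^ m) x = (u ^^ m) y" using eq by simp
  qed
qed


lemma MOVE:
  assumes Q: "Q \<subseteq> {1..n}" "card Q = k" and x: "x \<in> Q" and y: "y \<in> {1..n}" "y \<notin> Q"
  shows "\<exists>e\<in>gen (insert a G). e x = y \<and> (\<forall>q\<in>Q-{x}. e q = q)"
proof -
  have "\<not> inj_on a {1..n}"
  proof
    assume "inj_on a {1..n}"
    then have "card I = n" by (simp add: I_def card_image)
    then show False using cardI kn by simp
  qed
  then obtain c1 c2 where c: "c1 \<in> {1..n}" "c2 \<in> {1..n}" "c1 \<noteq> c2" "a c1 = a c2"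
    unfolding inj_on_def by blast
  define r where "r w = (if w = a c1 then c1 else (SOME z. z \<in> {1..n} \<and> a z = w))" for w
  have r: "r w \<in> {1..n} \<and> a (r w) = w" if "w \<in> I" for w
  proof (cases "w = a c1")
    case True then show ?thesis using c by (simp add: r_def)
  next
    case False
    have "\<exists>z. z \<in> {1..n} \<and> a z = w" using that by (auto simp: I_def)
    from someI_ex[OF this] show ?thesis using False by (simp add: r_def)
  qed
  have injr: "inj_on r I"
  proof (rule inj_onI)
    fix w1 w2 assume w: "w1 \<in> I" "w2 \<in> I" "r w1 = r w2"
    then have "a (r w1) = a (r w2)" by simp
    then show "w1 = w2" using r[OF w(1)] r[OF w(2)] by simp
  qed
  have c1I: "a c1 \<in> I" using c aI by blast
  have rc1: "r (a c1) = c1" by (simp add: r_def)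
  define D where "D = r ` I - {c1}"
  have c1T: "c1 \<in> r ` I" using image_eqI[where f=r and x="a c1" and b=c1 and A=I] rc1 c1I by simp
  have cardD: "card D = k - 1"
    unfolding D_def using c1T card_image[OF injr] cardI finI by (simp add: card_Diff_singleton)
  have Dsub: "D \<subseteq> {1..n}" using r by (auto simp: D_def)
  have ainjD: "inj_on a D"
  proof (rule inj_onI)
    fix d1 d2 assume d: "d1 \<in> D" "d2 \<in> D" "a d1 = a d2"
    obtain w1 where w1: "w1 \<in> I" "d1 = r w1" using d(1) by (auto simp: D_def)
    obtain w2 where w2: "w2 \<in> I" "d2 = r w2" using d(2) by (auto simp: D_def)
    have "w1 = w2" using r[OF w1(1)] r[OF w2(1)] d(3) w1(2) w2(2) by simp
    then show "d1 = d2" using w1 w2 by simp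
  qed
  have ac1D: "a c1 \<notin> a ` D"
  proof
    assume "a c1 \<in> a ` D"
    then obtain d where d: "a c1 = a d" "d \<in> D" by (rule imageE)
    then obtain w where w: "w \<in> I" "d = r w" "r w \<noteq> c1" by (auto simp: D_def)
    have "w = a c1" using r[OF w(1)] w(2) d(1) by simp
    then show False using w rc1 by simp
  qed
  have c2D: "c2 \<notin> D"
  proof
    assume "c2 \<in> D" then have "a c2 \<in> a ` D" by blast
    then show False using ac1D c(4) by simp
  qed
  have c1D: "c1 \<notin> D" by (simp add: D_def)
  have fQ: "finite Q" using Q finite_subset by blast
  have kpos: "k > 0" using Q x fQ card_gt_0_iff by blast
  have cardQx: "card (Q - {x}) = k - 1" using Q x fQ by simp
  have fD: "finite D" using Dsub finite_subset by blast
  obtain \<delta> where \<delta>: "bij_betw \<delta> (Q - {x}) D"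
    using finite_same_card_bij[of "Q - {x}" D] fQ fD cardQx cardD by auto
  define \<beta> where "\<beta> z = (if z = x then c1 else if z = y then c2 else \<delta> z)" for z
  have xy: "x \<noteq> y" using x y by blast
  have b1: "bij_betw \<beta> {x, y} {c1, c2}"
    unfolding bij_betw_def inj_on_def using xy c by (auto simp: \<beta>_def)
  have b2: "bij_betw \<beta> (Q - {x}) D"
    using \<delta> by (rule bij_betw_cong[THEN iffD1, rotated]) (use y in \<open>auto simp: \<beta>_def\<close>)
  have b: "bij_betw \<beta> ({x, y} \<union> (Q - {x})) ({c1, c2} \<union> D)"
    by (rule bij_betw_combine[OF b1 b2]) (use c1D c2D in auto)
  obtain p where p: "p \<in> Sn n" "\<forall>s\<in>{x, y} \<union> (Q - {x}). p s = \<beta> s"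
  proof -
    have "{x, y} \<union> (Q - {x}) \<subseteq> {1..n}" using Q(1) x y(1) by blast
    moreover have "{c1, c2} \<union> D \<subseteq> {1..n}" using c(1,2) Dsub by blast
    ultimately show ?thesis using EXT[OF _ _ b] that by blast
  qed
  have px: "p x = c1" using p by (simp add: \<beta>_def)
  have py: "p y = c2" using p xy by (simp add: \<beta>_def)
  have pq: "p q = \<delta> q" if qx: "q \<in> Q - {x}" for q
  proof -
    have q: "q \<in> Q" "q \<noteq> x" using qx by auto
    have "q \<noteq> y" using q(1) y(2) by auto
    have "p q = \<beta> q" using p(2) qx by blast
    then show ?thesis using q \<open>q \<noteq> y\<close> by (simp add: \<beta>_def)
  qed
  define Q' where "Q' = insert y (Q - {x})"
  have Q'sub: "Q' \<subseteq> {1..n}" unfolding Q'_def using Q(1) y(1) by blast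
  have "y \<notin> Q - {x}" using y(2) by blast
  then have "card Q' = Suc (card (Q - {x}))" unfolding Q'_def using fQ by simp
  then have cardQ': "card Q' = k" using cardQx kpos by simp
  have dD: "\<delta> q \<in> D" if "q \<in> Q - {x}" for q using bij_betw_apply[OF \<delta> that] .
  have injQ': "inj_on (\<lambda>z. a (p z)) Q'"
  proof (rule inj_onI)
    fix z1 z2 assume z: "z1 \<in> Q'" "z2 \<in> Q'" "a (p z1) = a (p z2)"
    show "z1 = z2"
    proof (cases "z1 = y"; cases "z2 = y")
      assume "z1 \<noteq> y" "z2 \<noteq> y"
      then have zz: "z1 \<in> Q - {x}" "z2 \<in> Q - {x}" using z by (auto simp: Q'_def)
      have "a (\<delta> z1) = a (\<delta> z2)" using z(3) pq[OF zz(1)] pq[OF zz(2)] by simp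
      then have "\<delta> z1 = \<delta> z2" using inj_onD[OF ainjD] dD[OF zz(1)] dD[OF zz(2)] by blast
      then show ?thesis using inj_onD[OF bij_betw_imp_inj_on[OF \<delta>]] zz by blast
    next
      assume "z1 = y" "z2 \<noteq> y"
      then have zz: "z2 \<in> Q - {x}" using z by (auto simp: Q'_def)
      have "a c1 = a (\<delta> z2)" using z(3) \<open>z1 = y\<close> py c(4) pq[OF zz] by simp
      then show ?thesis using ac1D dD[OF zz] by blast
    next
      assume "z1 \<noteq> y" "z2 = y"
      then have zz: "z1 \<in> Q - {x}" using z by (auto simp: Q'_def)
      have "a c1 = a (\<delta> z1)" using z(3) \<open>z2 = y\<close> py c(4) pq[OF zz] by simp
      then show ?thesis using ac1D dD[OF zz] by blast
    qed simp
  qed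
  obtain e where e: "e \<in> gen (insert a G)" "\<forall>q\<in>Q'. e q = q"
      "\<forall>x\<in>{1..n}. \<forall>y\<in>{1..n}. a (p x) = a (p y) \<longrightarrow> e x = e y"
    using IDEM[OF p(1) Q'sub cardQ' injQ'] by blast
  have xO: "x \<in> {1..n}" using Q(1) x by blast
  have "e x = e y" using e(3)[rule_format, OF xO y(1)] px py c(4) by simp
  also have "e y = y" using e(2) by (simp add: Q'_def)
  finally show ?thesis using e(1,2) by (auto simp: Q'_def)
qed

definition ok where
  "ok \<phi> \<longleftrightarrow> inj_on \<phi> I \<and> \<phi> ` I \<subseteq> {1..n} \<and>
     (\<exists>m\<in>gen (insert a G). \<forall>x\<in>{1..n}. m x = \<phi> (a x))"

lemma ok_id: "ok id"
  unfolding ok_def by (intro conjI bexI[OF _ aM]) (use I_sub in auto)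

lemma ok_move:
  assumes ok: "ok \<phi>" and x: "x \<in> \<phi> ` I" and y: "y \<in> {1..n}" "y \<notin> \<phi> ` I"
  shows "ok (\<lambda>z. if \<phi> z = x then y else \<phi> z)"
proof -
  have inj: "inj_on \<phi> I" and sub: "\<phi> ` I \<subseteq> {1..n}" using ok by (auto simp: ok_def)
  obtain m where m: "m \<in> gen (insert a G)" "\<forall>x\<in>{1..n}. m x = \<phi> (a x)"
    using ok by (auto simp: ok_def)
  have card: "card (\<phi> ` I) = k" using card_image[OF inj] cardI by simp
  obtain e where e: "e \<in> gen (insert a G)" "e x = y" "\<forall>q\<in>\<phi> ` I - {x}. e q = q"
    using MOVE[OF sub card x y] by blast
  let ?\<psi> = "\<lambda>z. if \<phi> z = x then y else \<phi> z"
  have pe: "?\<psi> z = e (\<phi> z)" if "z \<in> I" for z using e that by auto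
  have i1: "inj_on ?\<psi> I"
    using inj y(2) unfolding inj_on_def by (metis imageI)
  have i2: "?\<psi> ` I \<subseteq> {1..n}" using sub y by auto
  have i3: "\<forall>z\<in>{1..n}. tmult m e z = ?\<psi> (a z)"
    using m e pe aI by (simp add: tmult_def)
  show ?thesis unfolding ok_def using i1 i2 i3 gen.mult[OF m(1) e(1)] by blast
qed


lemma reach:
  assumes "ok \<phi>0" "inj_on \<phi> I" "\<phi> ` I \<subseteq> {1..n}"
  shows "\<exists>\<phi>'. ok \<phi>' \<and> (\<forall>z\<in>I. \<phi>' z = \<phi> z)"
  using assms
proof (induction "card {z\<in>I. \<phi>0 z \<noteq> \<phi> z}" arbitrary: \<phi>0 rule: less_induct)
  case less
  have ok0: "ok \<phi>0" by fact
  have inj0: "inj_on \<phi>0 I" and sub0: "\<phi>0 ` I \<subseteq> {1..n}" using ok0 by (auto simp: ok_def)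
  define D0 where "D0 = {z\<in>I. \<phi>0 z \<noteq> \<phi> z}"
  have fD0: "finite D0" using finI by (simp add: D0_def)
  show ?case
  proof (cases "\<forall>z\<in>I. \<phi>0 z = \<phi> z")
    case True then show ?thesis using ok0 by blast
  next
    case False
    then obtain t where t: "t \<in> I" "\<phi>0 t \<noteq> \<phi> t" by blast
    have tD: "t \<in> D0" using t by (simp add: D0_def)
    have vO: "\<phi> t \<in> {1..n}" using less.prems(3) t(1) by blast
    show ?thesis
    proof (cases "\<phi> t \<in> \<phi>0 ` I")
      case False
      define \<phi>1 where "\<phi>1 = (\<lambda>z. if \<phi>0 z = \<phi>0 t then \<phi> t else \<phi>0 z)"
      have ok1: "ok \<phi>1" unfolding \<phi>1_def
        by (rule ok_move[OF ok0]) (use t vO False in auto)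
      have sub: "{z\<in>I. \<phi>1 z \<noteq> \<phi> z} \<subseteq> D0 - {t}"
      proof
        fix z assume z: "z \<in> {z\<in>I. \<phi>1 z \<noteq> \<phi> z}"
        show "z \<in> D0 - {t}"
        proof (cases "\<phi>0 z = \<phi>0 t")
          case True
          then have "z = t" using inj0 z t(1) by (auto dest: inj_onD)
          then show ?thesis using z by (simp add: \<phi>1_def)
        next
          case False
          then show ?thesis using z by (auto simp: \<phi>1_def D0_def)
        qed
      qed
      have "card {z\<in>I. \<phi>1 z \<noteq> \<phi> z} < card D0"
      proof -
        have "card {z\<in>I. \<phi>1 z \<noteq> \<phi> z} \<le> card (D0 - {t})" using sub fD0 by (intro card_mono) auto
        also have "\<dots> < card D0" using fD0 tD by (rule card_Diff1_less)
        finally show ?thesis .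
      qed
      then show ?thesis using less.hyps[OF _ ok1 less.prems(2,3)] unfolding D0_def by blast
    next
      case True
      then obtain t' where t': "\<phi> t = \<phi>0 t'" "t' \<in> I" by (rule imageE)
      have tt: "t' \<noteq> t" using t t' by auto
      have "\<not> {1..n} \<subseteq> \<phi>0 ` I"
      proof
        assume "{1..n} \<subseteq> \<phi>0 ` I"
        then have "card {1..n} \<le> card (\<phi>0 ` I)" by (intro card_mono) (simp_all add: finI)
        moreover have "card (\<phi>0 ` I) \<le> k" using card_image_le[OF finI, of \<phi>0] cardI by simp
        ultimately show False using kn by simp
      qed
      then obtain z0 where z0: "z0 \<in> {1..n}" "z0 \<notin> \<phi>0 ` I" by blast
      define \<phi>1 where "\<phi>1 = (\<lambda>z. if \<phi>0 z = \<phi> t then z0 else \<phi>0 z)"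
      have ok1: "ok \<phi>1" unfolding \<phi>1_def
        by (rule ok_move[OF ok0]) (use True z0 in auto)
      have inj1: "inj_on \<phi>1 I" using ok1 by (simp add: ok_def)
      have p1t: "\<phi>1 t = \<phi>0 t" using t(2) by (simp add: \<phi>1_def)
      have p1t': "\<phi>1 t' = z0" using t'(1) by (simp add: \<phi>1_def)
      have p1z: "\<phi>1 z = \<phi>0 z" if "z \<in> I" "z \<noteq> t'" for z
      proof -
        have "\<phi>0 z \<noteq> \<phi>0 t'" using inj0 that t'(2) by (auto dest: inj_onD)
        then show ?thesis using t'(1) by (simp add: \<phi>1_def)
      qed
      have vnot: "\<phi> t \<notin> \<phi>1 ` I"
      proof
        assume "\<phi> t \<in> \<phi>1 ` I"
        then obtain z where z: "\<phi> t = \<phi>1 z" "z \<in> I" by (rule imageE)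
        show False
        proof (cases "z = t'")
          case True
          have "\<phi>0 t' \<in> \<phi>0 ` I" by (rule imageI[OF t'(2)])
          then show False using z True p1t' t'(1) z0(2) by simp
        next
          case False
          then have "\<phi>0 z = \<phi>0 t'" using z p1z t'(1) by simp
          then have "z = t'" using inj0 z(2) t'(2) by (auto dest: inj_onD)
          then show False using False by simp
        qed
      qed
      define \<phi>2 where "\<phi>2 = (\<lambda>z. if \<phi>1 z = \<phi>1 t then \<phi> t else \<phi>1 z)"
      have ok2: "ok \<phi>2" unfolding \<phi>2_def
        by (rule ok_move[OF ok1]) (use t(1) vO vnot in auto)
      have sub: "{z\<in>I. \<phi>2 z \<noteq> \<phi> z} \<subseteq> D0 - {t}"
      proof
        fix z assume z: "z \<in> {z\<in>I. \<phi>2 z \<noteq> \<phi> z}"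
        then have zI: "z \<in> I" and ne: "\<phi>2 z \<noteq> \<phi> z" by auto
        have "z \<noteq> t" using ne by (auto simp: \<phi>2_def)
        then have "\<phi>1 z \<noteq> \<phi>1 t" using inj1 zI t(1) by (auto dest: inj_onD)
        then have e2: "\<phi>2 z = \<phi>1 z" by (simp add: \<phi>2_def)
        show "z \<in> D0 - {t}"
        proof (cases "z = t'")
          case True
          have "\<phi> t' \<noteq> \<phi> t" using less.prems(2) t'(2) t(1) tt by (auto dest: inj_onD)
          then show ?thesis using True t'(1) zI tt by (auto simp: D0_def)
        next
          case False
          then show ?thesis using e2 p1z[OF zI False] ne zI \<open>z \<noteq> t\<close> by (auto simp: D0_def)
        qed
      qed
      have "card {z\<in>I. \<phi>2 z \<noteq> \<phi> z} < card D0"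
      proof -
        have "card {z\<in>I. \<phi>2 z \<noteq> \<phi> z} \<le> card (D0 - {t})" using sub fD0 by (intro card_mono) auto
        also have "\<dots> < card D0" using fD0 tD by (rule card_Diff1_less)
        finally show ?thesis .
      qed
      then show ?thesis using less.hyps[OF _ ok2 less.prems(2,3)] unfolding D0_def by blast
    qed
  qed
qed

lemma MAIN:
  assumes h0: "h0 \<in> Sn n" and h1: "h1 \<in> Sn n"
  shows "tmult (tmult h0 a) h1 \<in> gen (insert a G)"
proof -
  obtain g0 where g0: "g0 \<in> G" "\<forall>x\<in>{1..n}. \<forall>y\<in>{1..n}. a (g0 x) = a (g0 y) \<longleftrightarrow> a (h0 x) = a (h0 y)"
    using LH[OF h0] by blast
  have g0S: "g0 \<in> Sn n" using g0(1) GS by blast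
  define c where "c w = (SOME x. x \<in> {1..n} \<and> a (g0 x) = w)" for w
  have c: "c w \<in> {1..n} \<and> a (g0 (c w)) = w" if wI: "w \<in> I" for w
  proof -
    have "w \<in> a ` {1..n}" using wI by (simp add: I_def)
    then obtain x where x: "w = a x" "x \<in> {1..n}" by (rule imageE)
    have "x \<in> g0 ` {1..n}" using x(2) Sn_img[OF g0S] by simp
    then obtain x' where x': "x = g0 x'" "x' \<in> {1..n}" by (rule imageE)
    then have "\<exists>x. x \<in> {1..n} \<and> a (g0 x) = w" using x by blast
    then show ?thesis unfolding c_def by (rule someI_ex)
  qed
  define \<phi> where "\<phi> w = h1 (a (h0 (c w)))" for w
  have aO: "x \<in> {1..n} \<Longrightarrow> a x \<in> {1..n}" for x using aI I_sub by blast
  have injphi: "inj_on \<phi> I"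
  proof (rule inj_onI)
    fix w1 w2 assume w: "w1 \<in> I" "w2 \<in> I" "\<phi> w1 = \<phi> w2"
    have m1: "a (h0 (c w1)) \<in> {1..n}" using c[OF w(1)] aO Sn_mem[OF h0] by blast
    have m2: "a (h0 (c w2)) \<in> {1..n}" using c[OF w(2)] aO Sn_mem[OF h0] by blast
    have "a (h0 (c w1)) = a (h0 (c w2))"
      using inj_onD[OF Sn_inj[OF h1] _ m1 m2] w(3) by (simp add: \<phi>_def)
    then have "a (g0 (c w1)) = a (g0 (c w2))" using g0(2) c[OF w(1)] c[OF w(2)] by blast
    then show "w1 = w2" using c[OF w(1)] c[OF w(2)] by simp
  qed
  have subphi: "\<phi> ` I \<subseteq> {1..n}"
  proof
    fix v assume "v \<in> \<phi> ` I"
    then obtain w where w: "v = \<phi> w" "w \<in> I" by (rule imageE)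
    have "c w \<in> {1..n}" using c[OF w(2)] by simp
    then show "v \<in> {1..n}" using w(1) aO Sn_mem[OF h0] Sn_mem[OF h1] by (simp add: \<phi>_def)
  qed
  obtain \<phi>' where phi': "ok \<phi>'" "\<forall>z\<in>I. \<phi>' z = \<phi> z"
    using reach[OF ok_id injphi subphi] by blast
  obtain m where m: "m \<in> gen (insert a G)" "\<forall>x\<in>{1..n}. m x = \<phi>' (a x)"
    using phi'(1) by (auto simp: ok_def)
  have mM: "tmult g0 m \<in> gen (insert a G)" by (intro gen.mult GM g0(1) m(1))
  have eq: "tmult (tmult h0 a) h1 = tmult g0 m"
  proof (rule Tn_eqI)
    show "tmult (tmult h0 a) h1 \<in> Tn n" using h0 h1 aT Sn_Tn tmult_Tn by blast
    show "tmult g0 m \<in> Tn n" using mM M_Tn by blast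
    fix x assume x: "x \<in> {1..n}"
    have gx: "g0 x \<in> {1..n}" using Sn_mem[OF g0S x] .
    have w: "a (g0 x) \<in> I" using aI[OF gx] .
    have "tmult g0 m x = \<phi> (a (g0 x))" using m(2) gx phi'(2) w by (simp add: tmult_def)
    also have "\<dots> = h1 (a (h0 x))"
    proof -
      have cc: "c (a (g0 x)) \<in> {1..n}" "a (g0 (c (a (g0 x)))) = a (g0 x)" using c[OF w] by auto
      then have "a (h0 (c (a (g0 x)))) = a (h0 x)" using g0(2) x by blast
      then show ?thesis by (simp add: \<phi>_def)
    qed
    finally show "tmult (tmult h0 a) h1 x = tmult g0 m x" by (simp add: tmult_def)
  qed
  show ?thesis using mM eq by simp
qed

lemma rank_small:
  assumes "x \<in> gen (insert a G)" shows "x \<in> G \<or> card (x ` {1..n}) \<le> k"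
  using assms
proof (induction rule: gen.induct)
  case (base x) then show ?case using rk by (auto simp: rank_def)
next
  case (mult x y)
  have img: "tmult x y ` {1..n} = y ` (x ` {1..n})" by (auto simp: tmult_def)
  show ?case
  proof (cases "x \<in> G")
    case xG: True
    show ?thesis
    proof (cases "y \<in> G")
      case True then have "tmult x y \<in> G" using xG sg by (simp add: is_subgroup_Sn_def)
      then show ?thesis by simp
    next
      case False
      then have "card (y ` {1..n}) \<le> k" using mult.IH(2) by simp
      moreover have "x ` {1..n} = {1..n}" using Sn_img xG GS by blast
      ultimately show ?thesis using img by simp
    qed
  next
    case False
    then have "card (x ` {1..n}) \<le> k" using mult.IH(1) by simp
    moreover have "card (y ` (x ` {1..n})) \<le> card (x ` {1..n})" by (rule card_image_le) simp
    ultimately show ?thesis using img by simp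
  qed
qed

lemma dir2:
  assumes "x \<in> gen (insert a (Sn n))"
  shows "x \<in> Sn n \<or> (\<forall>s\<in>Sn n. \<forall>s'\<in>Sn n. tmult (tmult s x) s' \<in> gen (insert a G))"
  using assms
proof (induction rule: gen.induct)
  case (base x) then show ?case using MAIN by auto
next
  case (mult x y)
  show ?case
  proof (cases "x \<in> Sn n")
    case xS: True
    show ?thesis
    proof (cases "y \<in> Sn n")
      case True then show ?thesis using xS Sn_tmult by blast
    next
      case False
      then have Y: "\<forall>s\<in>Sn n. \<forall>s'\<in>Sn n. tmult (tmult s y) s' \<in> gen (insert a G)"
        using mult.IH(2) by blast
      have "tmult (tmult s (tmult x y)) s' \<in> gen (insert a G)" if "s \<in> Sn n" "s' \<in> Sn n" for s s'
        using Y[rule_format, OF Sn_tmult[OF that(1) xS] that(2)] by (simp add: tmult_assoc)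
      then show ?thesis by blast
    qed
  next
    case xN: False
    then have X: "\<forall>s\<in>Sn n. \<forall>s'\<in>Sn n. tmult (tmult s x) s' \<in> gen (insert a G)"
      using mult.IH(1) by blast
    show ?thesis
    proof (cases "y \<in> Sn n")
      case True
      have "tmult (tmult s (tmult x y)) s' \<in> gen (insert a G)" if "s \<in> Sn n" "s' \<in> Sn n" for s s'
        using X[rule_format, OF that(1) Sn_tmult[OF True that(2)]] by (simp add: tmult_assoc)
      then show ?thesis by blast
    next
      case False
      then have Y: "\<forall>s\<in>Sn n. \<forall>s'\<in>Sn n. tmult (tmult s y) s' \<in> gen (insert a G)"
        using mult.IH(2) by blast
      have "tmult (tmult s (tmult x y)) s' \<in> gen (insert a G)" if "s \<in> Sn n" "s' \<in> Sn n" for s s'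
      proof -
        have "tmult (tmult s x) id \<in> gen (insert a G)" using X that(1) id_Sn by blast
        moreover have "tmult (tmult id y) s' \<in> gen (insert a G)" using Y that(2) id_Sn by blast
        ultimately have "tmult (tmult (tmult s x) id) (tmult (tmult id y) s') \<in> gen (insert a G)"
          by (rule gen.mult)
        then show ?thesis by (simp add: tmult_assoc)
      qed
      then show ?thesis by blast
    qed
  qed
qed

lemma main_eq: "gen (insert a G) - G = gen (insert a (Sn n)) - Sn n"
proof (intro equalityI subsetI)
  fix x assume x: "x \<in> gen (insert a G) - G"
  have "insert a G \<subseteq> insert a (Sn n)" using GS by blast
  then have x1: "x \<in> gen (insert a (Sn n))" using gen_mono x by blast
  have "card (x ` {1..n}) \<le> k" using rank_small x by blast
  then have "x \<notin> Sn n" using kn Sn_img[of x n] by auto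
  then show "x \<in> gen (insert a (Sn n)) - Sn n" using x1 by blast
next
  fix x assume x: "x \<in> gen (insert a (Sn n)) - Sn n"
  then have "\<forall>s\<in>Sn n. \<forall>s'\<in>Sn n. tmult (tmult s x) s' \<in> gen (insert a G)" using dir2 by blast
  then have "tmult (tmult id x) id \<in> gen (insert a G)" using id_Sn by blast
  then have "x \<in> gen (insert a G)" by simp
  moreover have "x \<notin> G" using x GS by blast
  ultimately show "x \<in> gen (insert a G) - G" by blast
qed

end

theorem lemma5p2:
  fixes n k :: nat and a :: "nat \<Rightarrow> nat" and G :: "(nat \<Rightarrow> nat) set"
  assumes "a \<in> Tn n"
    and "rank n a = k" and "k < n"
    and "is_subgroup_Sn n G"
    and "k_homogeneous n k G"
    and "lam_homogeneous n (kernel_type n a) G"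
  shows "gen (insert a G) - G = gen (insert a (Sn n)) - Sn n"
proof -
  interpret L n k a G using assms by unfold_locales
  show ?thesis by (rule main_eq)
qed

end
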